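(* Let $1<p<\infty$, $\alpha\in\mathbb R$, $\mathbb X=L^p(\log L)^\alpha(\mathbb T)$ and $\mathcal D=\{e^{inx}\}_{n\in\mathbb Z}$. There is $C>0$ such that $\Sigma_N(\mathcal D)$ satisfies property $A_3(H)$ for every $N$, with $$H(N)=C\max\Big\{N^{1/2},\ N^{1/p}(\log(e+N))^{-\alpha}\Big\}.$$
   Context: $\mathbb T\equiv[-\pi,\pi)$; $L^p(\log L)^\alpha(\mathbb T)$ is the Orlicz space $L^\Phi$, $\Phi(t)=\int_0^ts^{p-1}(\log(c+s))^{\alpha p}ds$ ($c>1$ fixed large enough that $\Phi$ is a Young function), Luxemburg norm. $\Sigma_N(\mathcal D)$ = linear combinations of at most $N$ elements of $\mathcal D$. Property $A_3(H)$ of $\Sigma_N$: for every $D<\infty$, $\sum_{j\in A}|a_j|\le H(|A|)\|\sum_{j\in B}a_j\phi_j\|$ for all scalars $a_j$ and finite $A\subset B\subset\mathbb Z$ with $|A|\le N$, $|B|<D$ (where $\phi_j=e^{ijx}$). *)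

theory Defs
  imports "HOL-Analysis.Analysis"
begin

definition LlogL_phi :: "real \<Rightarrow> real \<Rightarrow> real \<Rightarrow> real \<Rightarrow> real" where
  "LlogL_phi p \<alpha> c t = integral {0..t} (\<lambda>s. s powr (p - 1) * (ln (c + s)) powr (\<alpha> * p))"

definition luxemburg_norm :: "(real \<Rightarrow> real) \<Rightarrow> (real \<Rightarrow> complex) \<Rightarrow> real" where
  "luxemburg_norm \<Phi> f = Inf {r::real. r > 0 \<and>
      (\<integral>\<^sup>+ x \<in> {-pi..<pi}. ennreal (\<Phi> (cmod (f x) / r)) \<partial>lborel) \<le> 1}"

definition trig :: "int \<Rightarrow> real \<Rightarrow> complex" where
  "trig j x = exp (\<i> * of_int j * of_real x)"

end

theory Submission imports Defs begin


lemma phi_zero: "LlogL_phi p \<alpha> c 0 = 0"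
  unfolding LlogL_phi_def by simp

lemma phi_neg: "t < 0 \<Longrightarrow> LlogL_phi p \<alpha> c t = 0"
  unfolding LlogL_phi_def by simp

lemma phi_nonneg: "0 \<le> LlogL_phi p \<alpha> c t"
proof (cases "(\<lambda>s. s powr (p - 1) * (ln (c + s)) powr (\<alpha> * p)) integrable_on {0..t}")
  case True
  then show ?thesis unfolding LlogL_phi_def by (rule integral_nonneg) auto
next
  case False
  then show ?thesis unfolding LlogL_phi_def by (simp add: not_integrable_integral)
qed

lemma phi_ratio:
  assumes cv: "convex_on {0..} (LlogL_phi p \<alpha> c)" and "0 \<le> s" "s \<le> t" "0 < t"
  shows "LlogL_phi p \<alpha> c s \<le> (s / t) * LlogL_phi p \<alpha> c t"
proof -
  have "LlogL_phi p \<alpha> c ((1 - s/t) *\<^sub>R 0 + (s/t) *\<^sub>R t) \<le> (1 - s/t) * LlogL_phi p \<alpha> c 0 + (s/t) * LlogL_phi p \<alpha> c t"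
    by (rule convex_onD[OF cv]) (use assms in auto)
  then show ?thesis using assms by (simp add: phi_zero)
qed

lemma phi_mono:
  assumes cv: "convex_on {0..} (LlogL_phi p \<alpha> c)"
  shows "mono (LlogL_phi p \<alpha> c)"
proof (rule monoI)
  fix s t :: real assume st: "s \<le> t"
  show "LlogL_phi p \<alpha> c s \<le> LlogL_phi p \<alpha> c t"
  proof (cases "s \<le> 0")
    case True
    then have "LlogL_phi p \<alpha> c s = 0" using phi_zero phi_neg by (cases "s = 0") auto
    then show ?thesis using phi_nonneg by simp
  next
    case False
    then have "LlogL_phi p \<alpha> c s \<le> (s / t) * LlogL_phi p \<alpha> c t"
      using phi_ratio[OF cv, of s t] st by auto
    also have "\<dots> \<le> LlogL_phi p \<alpha> c t"
      using False st phi_nonneg[of p \<alpha> c t] by (intro mult_left_le_one_le) auto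
    finally show ?thesis .
  qed
qed

lemma phi_cont:
  fixes p c \<alpha> :: real
  assumes "1 < p" "1 < c" 
  shows "continuous_on {0..} (\<lambda>s. s powr (p - 1) * (ln (c + s)) powr (\<alpha> * p))"
proof (rule continuous_on_mult)
  show "continuous_on {0..} (\<lambda>s::real. s powr (p - 1))"
    by (rule continuous_on_powr') (use assms in \<open>auto intro: continuous_intros\<close>)
  show "continuous_on {0..} (\<lambda>s. (ln (c + s)) powr (\<alpha> * p))"
    by (rule continuous_on_powr) (use assms in \<open>auto intro!: continuous_intros\<close>)
qed

lemma phi_integrable:
  fixes p c \<alpha> a b :: real
  assumes "1 < p" "1 < c" and that: "0 \<le> a"
  shows "(\<lambda>s. s powr (p - 1) * (ln (c + s)) powr (\<alpha> * p)) integrable_on {a..b}"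
  apply (rule integrable_continuous_real)
  apply (rule continuous_on_subset[OF phi_cont[OF assms(1,2)]])
  using that by auto

lemma ln_half:
  fixes c T :: real
  assumes "1 < c" "0 \<le> T"
  shows "ln (c + T) \<le> (1 + ln 2 / ln c) * ln (c + T / 2)"
proof -
  have lc: "0 < ln c" using assms by simp
  have l2: "ln c \<le> ln (c + T/2)" using assms by simp
  have "ln (c + T) \<le> ln (2 * (c + T/2))" using assms by simp
  also have "\<dots> = ln 2 + ln (c + T/2)" using assms by (intro ln_mult_pos) auto
  also have "ln 2 \<le> (ln 2 / ln c) * ln (c + T/2)"
  proof -
    have "ln 2 = (ln 2 / ln c) * ln c" using lc by simp
    also have "\<dots> \<le> (ln 2 / ln c) * ln (c + T/2)"
      using l2 lc by (intro mult_left_mono) auto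
    finally show ?thesis .
  qed
  finally show ?thesis by (simp add: algebra_simps)
qed

lemma powr_cmp:
  fixes x y K b :: real
  assumes "0 < x" "x \<le> y" "y \<le> K * x" "1 \<le> K"
  shows "K powr (- \<bar>b\<bar>) * y powr b \<le> x powr b"
proof -
  define t where "t = x / y"
  have y0: "0 < y" using assms by simp
  have xt: "x = y * t" using y0 by (simp add: t_def)
  have t0: "0 < t" "t \<le> 1" using assms y0 by (auto simp: t_def)
  have tK: "1 / K \<le> t" using assms y0 by (auto simp: t_def field_simps)
  have "K powr (- \<bar>b\<bar>) \<le> t powr b"
  proof (cases "0 \<le> b")
    case True
    have "K powr (- \<bar>b\<bar>) = (1 / K) powr b" using True assms by (simp add: powr_minus_divide powr_divide)
    also have "\<dots> \<le> t powr b" using tK True assms by (intro powr_mono2) auto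
    finally show ?thesis .
  next
    case False
    have "K powr (- \<bar>b\<bar>) \<le> K powr 0" using False assms by (intro powr_mono) auto
    then have "K powr (- \<bar>b\<bar>) \<le> 1" using assms by simp
    moreover have "1 \<le> t powr b"
    proof -
      have "1 \<le> (1/t) powr (-b)" using t0 False by (intro ge_one_powr_ge_zero) (auto simp: field_simps)
      also have "(1/t) powr (-b) = t powr b" using t0 by (simp add: powr_minus_divide powr_divide)
      finally show ?thesis .
    qed
    ultimately show ?thesis by simp
  qed
  then have "K powr (- \<bar>b\<bar>) * y powr b \<le> t powr b * y powr b"
    by (intro mult_right_mono) auto
  also have "\<dots> = x powr b" using xt y0 t0 by (simp add: powr_mult)
  finally show ?thesis .
qed

lemma phi_lower:
  fixes p \<alpha> c T :: real
  assumes p: "1 < p" and c: "1 < c" and T: "0 < T"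
  shows "2 powr (-p) * (1 + ln 2 / ln c) powr (- \<bar>\<alpha> * p\<bar>) * T powr p * ln (c + T) powr (\<alpha> * p)
           \<le> LlogL_phi p \<alpha> c T"
proof -
  define h where "h = (\<lambda>s::real. s powr (p - 1) * (ln (c + s)) powr (\<alpha> * p))"
  define K where "K = 1 + ln 2 / ln c"
  define m where "m = (T/2) powr (p-1) * (K powr (- \<bar>\<alpha> * p\<bar>) * ln (c + T) powr (\<alpha> * p))"
  have lc: "0 < ln c" using c by simp
  have K1: "1 \<le> K" using lc by (simp add: K_def)
  have int: "h integrable_on {a..b}" if "0 \<le> a" for a b
    unfolding h_def using phi_integrable[OF p c that] .
  have "LlogL_phi p \<alpha> c T = integral {0..T} h" by (simp add: LlogL_phi_def h_def)
  also have "\<dots> = integral {0..T/2} h + integral {T/2..T} h"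
    using Henstock_Kurzweil_Integration.integral_combine[where a=0 and c="T/2" and b=T and f=h] T int[of 0 T] by auto
  finally have eq: "LlogL_phi p \<alpha> c T = integral {0..T/2} h + integral {T/2..T} h" .
  have nn: "0 \<le> integral {0..T/2} h"
    by (rule integral_nonneg) (use int in \<open>auto simp: h_def\<close>)
  have hm: "m \<le> h s" if s: "s \<in> {T/2..T}" for s
  proof -
    have s0: "0 < s" using s T by auto
    have a1: "(T/2) powr (p-1) \<le> s powr (p-1)" using s T p by (intro powr_mono2) auto
    have lcs: "0 < ln (c + s)" using c s0 by simp
    have b1: "ln (c + s) \<le> ln (c + T)" using s c s0 by simp
    have b2: "ln (c + T) \<le> K * ln (c + s)"
    proof -
      have "ln (c + T) \<le> K * ln (c + T/2)" unfolding K_def using ln_half[OF c] T by simp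
      also have "\<dots> \<le> K * ln (c + s)" using K1 s c T by (intro mult_left_mono) auto
      finally show ?thesis .
    qed
    have "K powr (- \<bar>\<alpha> * p\<bar>) * ln (c + T) powr (\<alpha> * p) \<le> ln (c + s) powr (\<alpha> * p)"
      by (rule powr_cmp[OF lcs b1 b2 K1])
    then show ?thesis unfolding m_def h_def
      by (intro mult_mono a1) auto
  qed
  have "integral {T/2..T} (\<lambda>_. m) \<le> integral {T/2..T} h"
    by (rule integral_le) (use hm int T in auto)
  then have "m * (T/2) \<le> integral {T/2..T} h" using T by (simp add: mult.commute)
  moreover have "m * (T/2) = 2 powr (-p) * K powr (- \<bar>\<alpha> * p\<bar>) * T powr p * ln (c + T) powr (\<alpha> * p)"
  proof -
    have "(T/2) powr (p-1) * (T/2) = (T/2) powr p" using T by (simp add: powr_diff)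
    moreover have "(T/2) powr p = 2 powr (-p) * T powr p" using T by (simp add: powr_divide powr_minus_divide)
    ultimately show ?thesis unfolding m_def by (simp add: algebra_simps)
  qed
  ultimately show ?thesis using eq nn unfolding K_def by linarith
qed

lemma ln_ratio:
  fixes c s T e :: real
  assumes c: "1 < c" and s: "0 < s" "s \<le> T" and e: "0 < e"
  shows "ln (c + T) \<le> (1 + 1 / (e * ln c)) * (T / s) powr e * ln (c + s)"
proof -
  define x where "x = T / s"
  have x1: "1 \<le> x" using s by (simp add: x_def)
  have lc: "0 < ln c" using c by simp
  have lcs: "ln c \<le> ln (c + s)" using c s by simp
  have xe: "1 \<le> x powr e" using x1 e by (intro ge_one_powr_ge_zero) auto
  have "c + T \<le> (c + s) * x"
  proof -
    have "(c + s) * x = c * x + T" using s by (simp add: x_def field_simps)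
    moreover have "c \<le> c * x" using x1 c by simp
    ultimately show ?thesis by simp
  qed
  then have A: "ln (c + T) \<le> ln ((c + s) * x)" using c s by simp
  have B: "ln ((c + s) * x) = ln (c + s) + ln x" using c s x1 by (intro ln_mult_pos) auto
  have C: "ln x \<le> x powr e / e" by (rule ln_powr_bound[OF x1 e])
  have D: "x powr e / e = (x powr e / (e * ln c)) * ln c" using lc e by simp
  have E: "(x powr e / (e * ln c)) * ln c \<le> (x powr e / (e * ln c)) * ln (c + s)"
    using lcs lc e by (intro mult_left_mono) auto
  have F: "ln (c + s) \<le> x powr e * ln (c + s)" using xe lcs lc by simp
  have G: "(1 + 1 / (e * ln c)) * x powr e * ln (c + s) = x powr e * ln (c + s) + (x powr e / (e * ln c)) * ln (c + s)"
    by (simp add: algebra_simps)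
  show ?thesis unfolding x_def[symmetric] using A B C D E F G by linarith
qed

lemma quasi_mono:
  fixes a b c :: real
  assumes c: "1 < c"
  shows "\<exists>K>0. \<forall>s T. 1 \<le> s \<longrightarrow> s \<le> T \<longrightarrow>
           s powr a * ln (c + s) powr b \<le> K * (1 + T powr a * ln (c + T) powr b)"
proof -
  have lc: "0 < ln c" using c by simp
  have lcs: "\<And>s. 0 \<le> s \<Longrightarrow> ln c \<le> ln (c + s)" using c by simp
  have lpos: "\<And>s. 0 \<le> s \<Longrightarrow> 0 < ln (c + s)" using c by simp
  have nn: "\<And>T. 0 \<le> T powr a * ln (c + T) powr b" by simp
  consider "0 \<le> a" "0 \<le> b" | "a \<le> 0" "b \<le> 0" | "0 < a" "b < 0" | "a < 0" "0 < b" by linarith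
  then show ?thesis
  proof cases
    case 1
    show ?thesis
    proof (intro exI[of _ 1] conjI allI impI)
      fix s T :: real assume st: "1 \<le> s" "s \<le> T"
      have "s powr a * ln (c + s) powr b \<le> T powr a * ln (c + T) powr b"
        using 1 st c by (intro mult_mono powr_mono2) auto
      then show "s powr a * ln (c + s) powr b \<le> 1 * (1 + T powr a * ln (c + T) powr b)" by simp
    qed simp
  next
    case 2
    show ?thesis
    proof (intro exI[of _ "ln c powr b + 1"] conjI allI impI)
      fix s T :: real assume st: "1 \<le> s" "s \<le> T"
      have "s powr a \<le> s powr 0" using 2 st by (intro powr_mono) auto
      then have "s powr a \<le> 1" using st by simp
      moreover have "ln (c + s) powr b \<le> ln c powr b" using 2 st lc lcs by (intro powr_mono2') auto
      ultimately have "s powr a * ln (c + s) powr b \<le> 1 * ln c powr b"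
        by (intro mult_mono) auto
      also have "\<dots> \<le> (ln c powr b + 1) * (1 + T powr a * ln (c + T) powr b)"
        using nn[of T] by (simp add: algebra_simps)
      finally show "s powr a * ln (c + s) powr b \<le> (ln c powr b + 1) * (1 + T powr a * ln (c + T) powr b)" .
    qed (simp add: add_nonneg_pos)
  next
    case 3
    define e where "e = a / (- b)"
    have e0: "0 < e" using 3 unfolding e_def by (intro divide_pos_pos) auto
    define Ke where "Ke = 1 + 1 / (e * ln c)"
    have Ke: "0 < Ke" using e0 lc by (simp add: Ke_def add_pos_pos)
    show ?thesis
    proof (intro exI[of _ "Ke powr (- b)"] conjI allI impI)
      fix s T :: real assume st: "1 \<le> s" "s \<le> T"
      have s0: "0 < s" using st by simp
      have T0: "0 < T" using st by simp
      have lr: "ln (c + T) \<le> Ke * (T / s) powr e * ln (c + s)"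
        unfolding Ke_def by (rule ln_ratio[OF c s0 st(2) e0])
      have "ln (c + s) powr b \<le> (ln (c + T) / (Ke * (T / s) powr e)) powr b"
      proof (rule powr_mono2')
        show "b \<le> 0" using 3 by simp
        show "0 < ln (c + T) / (Ke * (T / s) powr e)" using lpos[of T] T0 Ke s0 by simp
        show "ln (c + T) / (Ke * (T / s) powr e) \<le> ln (c + s)"
          using lr Ke s0 T0 by (simp add: divide_le_eq mult.commute mult.left_commute)
      qed
      also have "\<dots> = ln (c + T) powr b * Ke powr (-b) * ((T / s) powr e) powr (-b)"
        using Ke s0 T0 lpos[of T]
        by (simp add: powr_divide powr_mult powr_minus_divide divide_inverse powr_minus inverse_powr)
      also have "((T / s) powr e) powr (-b) = (T / s) powr a"
        using 3 by (simp add: powr_powr e_def)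
      finally have "ln (c + s) powr b \<le> ln (c + T) powr b * Ke powr (-b) * (T / s) powr a" .
      then have "s powr a * ln (c + s) powr b \<le> s powr a * (ln (c + T) powr b * Ke powr (-b) * (T / s) powr a)"
        by (intro mult_left_mono) auto
      also have "\<dots> = Ke powr (-b) * (T powr a * ln (c + T) powr b)"
        using s0 T0 by (simp add: powr_divide)
      also have "\<dots> \<le> Ke powr (-b) * (1 + T powr a * ln (c + T) powr b)" by (intro mult_left_mono) auto
      finally show "s powr a * ln (c + s) powr b \<le> Ke powr (- b) * (1 + T powr a * ln (c + T) powr b)" .
    qed (use Ke in simp)
  next
    case 4
    define e where "e = - a / b"
    have e0: "0 < e" using 4 unfolding e_def by (intro divide_pos_pos) auto
    define Ke where "Ke = 1 + 1 / (e * ln c)"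
    have Ke: "0 < Ke" using e0 lc by (simp add: Ke_def add_pos_pos)
    show ?thesis
    proof (intro exI[of _ "Ke powr b * ln (c + 1) powr b"] conjI allI impI)
      fix s T :: real assume st: "1 \<le> s" "s \<le> T"
      have s0: "0 < s" using st by simp
      have lr: "ln (c + s) \<le> Ke * (s / 1) powr e * ln (c + 1)"
        unfolding Ke_def by (rule ln_ratio[OF c _ st(1) e0]) simp
      have "ln (c + s) powr b \<le> (Ke * s powr e * ln (c + 1)) powr b"
        using lr 4 lpos[of s] st by (intro powr_mono2) auto
      also have "\<dots> = Ke powr b * s powr (- a) * ln (c + 1) powr b"
        using Ke s0 4 by (simp add: powr_mult powr_powr e_def)
      finally have "s powr a * ln (c + s) powr b \<le> s powr a * (Ke powr b * s powr (- a) * ln (c + 1) powr b)"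
        by (intro mult_left_mono) auto
      also have "\<dots> = Ke powr b * ln (c + 1) powr b"
        using s0 by (simp add: powr_minus field_simps)
      also have "\<dots> \<le> Ke powr b * ln (c + 1) powr b * (1 + T powr a * ln (c + T) powr b)"
        using nn[of T] by (simp add: algebra_simps)
      finally show "s powr a * ln (c + s) powr b \<le> Ke powr b * ln (c + 1) powr b * (1 + T powr a * ln (c + T) powr b)" .
    qed (use Ke lpos[of 1] in simp)
  qed
qed

lemma powr_cmp2:
  fixes x y K b :: real
  assumes "0 < x" "0 < y" "x \<le> K * y" "y \<le> K * x" "1 \<le> K"
  shows "K powr (- \<bar>b\<bar>) * y powr b \<le> x powr b"
proof -
  define t where "t = x / y"
  have xt: "x = y * t" using assms by (simp add: t_def)
  have t0: "0 < t" using assms by (auto simp: t_def)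
  have tK: "1 / K \<le> t" "t \<le> K" using assms by (auto simp: t_def field_simps)
  have "K powr (- \<bar>b\<bar>) \<le> t powr b"
  proof (cases "0 \<le> b")
    case True
    have "K powr (- \<bar>b\<bar>) = (1 / K) powr b" using True assms by (simp add: powr_minus_divide powr_divide)
    also have "\<dots> \<le> t powr b" using tK True assms by (intro powr_mono2) auto
    finally show ?thesis .
  next
    case False
    have "K powr (- \<bar>b\<bar>) = K powr b" using False by simp
    also have "\<dots> \<le> t powr b" using tK t0 False by (intro powr_mono2') auto
    finally show ?thesis .
  qed
  then have "K powr (- \<bar>b\<bar>) * y powr b \<le> t powr b * y powr b"
    by (intro mult_right_mono) auto
  also have "\<dots> = x powr b" using xt assms t0 by (simp add: powr_mult)
  finally show ?thesis .
qed

definition Hf :: "real \<Rightarrow> real \<Rightarrow> nat \<Rightarrow> real" where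
  "Hf p \<alpha> n = max (sqrt (real n)) (real n powr (1 / p) * (ln (exp 1 + real n)) powr (- \<alpha>))"

lemma Hf_ge_sqrt: "sqrt (real n) \<le> Hf p \<alpha> n" by (simp add: Hf_def)
lemma Hf_pos: "1 \<le> n \<Longrightarrow> 0 < Hf p \<alpha> n"
proof -
  assume "1 \<le> n"
  then have "0 < sqrt (real n)" by simp
  then show ?thesis using Hf_ge_sqrt[of n p \<alpha>] by linarith
qed

lemma key_a:
  fixes p \<alpha> c :: real
  assumes p: "1 < p" and c: "1 < c"
  shows "\<exists>Ka>0. \<forall>n::nat. 1 \<le> n \<longrightarrow>
     real n \<le> Ka * (Hf p \<alpha> n powr p * ln (c + Hf p \<alpha> n) powr (\<alpha> * p))"
proof -
  have lc: "0 < ln c" using c by simp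
  define K1 where "K1 = 1 / ln c + 2"
  define K2 where "K2 = ln (c + 1) + 1 + \<bar>\<alpha>\<bar>"
  define K where "K = max K1 K2"
  have K1: "1 \<le> K1" using lc by (simp add: K1_def)
  have K2: "1 \<le> K2" using c by (simp add: K2_def)
  have K: "1 \<le> K" using K1 by (simp add: K_def)
  show ?thesis
  proof (intro exI[of _ "K powr \<bar>\<alpha> * p\<bar>"] conjI allI impI)
    show "0 < K powr \<bar>\<alpha> * p\<bar>" using K by simp
    fix n :: nat assume n1: "1 \<le> n"
    define H where "H = Hf p \<alpha> n"
    define ell where "ell = ln (exp 1 + real n)"
    define L where "L = ln (c + H)"
    have n0: "(1::real) \<le> real n" using n1 by simp
    have H0: "0 < H" using Hf_pos[OF n1] by (simp add: H_def)
    have l1: "1 \<le> ell"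
    proof -
      have "ln (exp 1) \<le> ln (exp 1 + real n)" by (intro ln_mono) auto
      then show ?thesis unfolding ell_def by (metis ln_exp)
    qed
    have L0: "0 < L" using c H0 by (simp add: L_def)
    have h1def: "H \<ge> real n powr (1 / p) * ell powr (- \<alpha>)" by (simp add: H_def Hf_def ell_def)
    have Hp: "real n * ell powr (- \<alpha> * p) \<le> H powr p"
    proof -
      have "(real n powr (1 / p) * ell powr (- \<alpha>)) powr p \<le> H powr p"
        using h1def p by (intro powr_mono2) auto
      moreover have "(real n powr (1 / p) * ell powr (- \<alpha>)) powr p = real n * ell powr (- \<alpha> * p)"
        using p n0 l1 by (simp add: powr_mult powr_powr)
      ultimately show ?thesis by simp
    qed
    have A1: "ell \<le> K1 * L"
    proof -
      have sq: "0 \<le> sqrt (real n)" by simp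
      have "exp 1 + real n \<le> exp 1 * (c + sqrt (real n))^2"
      proof -
        have "(c + sqrt (real n))^2 = c^2 + 2 * c * sqrt (real n) + real n"
          by (simp add: power2_eq_square algebra_simps)
        moreover have "1 \<le> c^2" using c by (simp add: one_le_power)
        moreover have "0 \<le> 2 * c * sqrt (real n)" using c by simp
        ultimately have "1 + real n \<le> (c + sqrt (real n))^2" by linarith
        then have "exp 1 * (1 + real n) \<le> exp 1 * (c + sqrt (real n))^2" by simp
        moreover have "exp 1 + real n \<le> exp 1 * (1 + real n)"
          using n0 by (simp add: algebra_simps)
        ultimately show ?thesis by linarith
      qed
      then have "ell \<le> ln (exp 1 * (c + sqrt (real n))^2)" unfolding ell_def using c
        by (intro ln_mono) (auto simp: add_pos_nonneg)
      also have "\<dots> = 1 + 2 * ln (c + sqrt (real n))"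
      proof -
        have cs: "0 < c + sqrt (real n)" using c sq by linarith
        have "ln (exp 1 * (c + sqrt (real n))^2) = ln (exp 1) + ln ((c + sqrt (real n))^2)"
          using cs by (intro ln_mult_pos) auto
        also have "ln ((c + sqrt (real n))^2) = 2 * ln (c + sqrt (real n))"
          using cs by (simp add: ln_realpow)
        finally show ?thesis by simp
      qed
      also have "\<dots> \<le> (1 / ln c + 2) * ln (c + sqrt (real n))"
      proof -
        have "ln c \<le> ln (c + sqrt (real n))" using c by (intro ln_mono) auto
        then have "1 \<le> ln (c + sqrt (real n)) / ln c" using lc by simp
        then show ?thesis by (simp add: algebra_simps)
      qed
      also have "\<dots> \<le> K1 * L"
      proof -
        have cs: "0 < c + sqrt (real n)" using c sq by linarith
        have "ln (c + sqrt (real n)) \<le> L" unfolding L_def H_def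
          using Hf_ge_sqrt[of n p \<alpha>] cs by (intro ln_mono) auto
        then show ?thesis unfolding K1_def using lc by (intro mult_left_mono) auto
      qed
      finally show ?thesis .
    qed
    have A2: "L \<le> K2 * ell"
    proof -
      define X where "X = (exp 1 + real n) powr (1 + \<bar>\<alpha>\<bar>)"
      have e1: "1 \<le> exp 1 + real n" by (simp add: add_increasing2)
      have X1: "exp 1 + real n \<le> X"
      proof -
        have "(exp 1 + real n) powr 1 \<le> X" unfolding X_def using e1 by (intro powr_mono) auto
        then show ?thesis using e1 by simp
      qed
      have lx: "ell \<le> exp 1 + real n" unfolding ell_def using ln_le_minus_one[of "exp 1 + real n"] e1 by simp
      have HX: "H \<le> X"
      proof -
        have "sqrt (real n) \<le> real n"
        proof -
          have s1: "1 \<le> sqrt (real n)" using n0 by simp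
          have "sqrt (real n) * 1 \<le> sqrt (real n) * sqrt (real n)" using s1 by (intro mult_left_mono) auto
          then show ?thesis by simp
        qed
        then have a: "sqrt (real n) \<le> X" using X1 exp_gt_zero[of 1] by linarith
        have "real n powr (1 / p) \<le> real n powr 1" using n0 p by (intro powr_mono) auto
        then have b1: "real n powr (1 / p) \<le> exp 1 + real n" using n0 exp_gt_zero[of 1] by (simp del: exp_gt_zero)
        have "ell powr (- \<alpha>) \<le> ell powr \<bar>\<alpha>\<bar>" using l1 by (intro powr_mono) auto
        also have "\<dots> \<le> (exp 1 + real n) powr \<bar>\<alpha>\<bar>" using lx l1 by (intro powr_mono2) auto
        finally have b2: "ell powr (- \<alpha>) \<le> (exp 1 + real n) powr \<bar>\<alpha>\<bar>" .
        have "real n powr (1 / p) * ell powr (- \<alpha>) \<le> (exp 1 + real n) * (exp 1 + real n) powr \<bar>\<alpha>\<bar>"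
          using b1 b2 by (intro mult_mono) auto
        also have "\<dots> = X" unfolding X_def using e1 by (simp add: powr_add)
        finally show ?thesis using a by (simp add: H_def Hf_def ell_def)
      qed
      have X1': "1 \<le> X" using X1 e1 by simp
      have cX: "c \<le> c * X" using X1' c by simp
      have "L \<le> ln ((c + 1) * X)" unfolding L_def
      proof (rule ln_mono)
        show "0 < c + H" using c H0 by simp
        show "c + H \<le> (c + 1) * X" using HX cX by (simp add: algebra_simps)
      qed
      also have "\<dots> = ln (c + 1) + (1 + \<bar>\<alpha>\<bar>) * ell" using c X1' e1
        by (simp add: ln_mult_pos X_def ell_def ln_powr)
      also have "\<dots> \<le> K2 * ell"
      proof -
        have "0 \<le> ln (c + 1)" using c by simp
        then have "ln (c + 1) \<le> ln (c + 1) * ell" using l1 by (simp add: mult_le_cancel_left1)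
        then show ?thesis unfolding K2_def by (simp add: algebra_simps)
      qed
      finally show ?thesis .
    qed
    have cmp: "K powr (- \<bar>\<alpha> * p\<bar>) * ell powr (\<alpha> * p) \<le> L powr (\<alpha> * p)"
    proof (rule powr_cmp2)
      show "0 < L" by (rule L0)
      show "0 < ell" using l1 by simp
      have "K2 * ell \<le> K * ell" using l1 by (intro mult_right_mono) (auto simp: K_def)
      then show "L \<le> K * ell" using A2 by linarith
      have "K1 * L \<le> K * L" using L0 by (intro mult_right_mono) (auto simp: K_def)
      then show "ell \<le> K * L" using A1 by linarith
      show "1 \<le> K" by (rule K)
    qed
    have "real n = K powr \<bar>\<alpha> * p\<bar> * (real n * ell powr (- \<alpha> * p) * (K powr (- \<bar>\<alpha> * p\<bar>) * ell powr (\<alpha> * p)))"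
      using K l1 by (simp add: powr_minus field_simps powr_add[symmetric])
    also have "\<dots> \<le> K powr \<bar>\<alpha> * p\<bar> * (H powr p * L powr (\<alpha> * p))"
      using Hp cmp l1 K by (intro mult_left_mono mult_mono) auto
    finally show "real n \<le> K powr \<bar>\<alpha> * p\<bar> * (Hf p \<alpha> n powr p * ln (c + Hf p \<alpha> n) powr (\<alpha> * p))"
      by (simp add: H_def L_def)
  qed
qed

lemma pointwise:
  fixes p \<alpha> c u v N T \<delta> S :: real
  assumes cv: "convex_on {0..} (LlogL_phi p \<alpha> c)"
    and u: "0 \<le> u" and v: "0 \<le> v" "v \<le> N" and T: "0 < T" and PT: "0 < LlogL_phi p \<alpha> c T"
    and d: "0 < \<delta>" and S: "0 \<le> S"
    and hS: "\<And>s. 1 \<le> s \<Longrightarrow> s < T \<Longrightarrow> s^2 \<le> S * LlogL_phi p \<alpha> c s"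
  shows "u * v \<le> (N * T / LlogL_phi p \<alpha> c T) * LlogL_phi p \<alpha> c u + (\<delta> / 2) * v^2 + 1 / (2 * \<delta>)
               + (S / (2 * \<delta>)) * LlogL_phi p \<alpha> c u"
proof -
  let ?P = "LlogL_phi p \<alpha> c"
  have Pu: "0 \<le> ?P u" by (rule phi_nonneg)
  have N0: "0 \<le> N" using v by simp
  have t2: "0 \<le> (\<delta> / 2) * v^2" using d by simp
  have t3: "0 \<le> 1 / (2 * \<delta>)" using d by simp
  have t4: "0 \<le> (S / (2 * \<delta>)) * ?P u" using d S Pu by simp
  have t1: "0 \<le> (N * T / ?P T) * ?P u" using N0 T PT Pu by simp
  show ?thesis
  proof (cases "T \<le> u")
    case True
    have "?P T \<le> (T / u) * ?P u" using phi_ratio[OF cv, of T u] True T by auto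
    then have "u * ?P T \<le> T * ?P u" using True T by (simp add: field_simps)
    then have uu: "u \<le> T * ?P u / ?P T" using PT by (simp add: field_simps)
    have "u * v \<le> u * N" using u v by (intro mult_left_mono) auto
    also have "\<dots> \<le> (T * ?P u / ?P T) * N" using uu N0 by (intro mult_right_mono) auto
    also have "\<dots> = (N * T / ?P T) * ?P u" by simp
    finally show ?thesis using t2 t3 t4 by linarith
  next
    case False
    have amgm: "u * v \<le> (\<delta> / 2) * v^2 + u^2 / (2 * \<delta>)"
    proof -
      have "0 \<le> (\<delta> * v - u)^2 / (2 * \<delta>)" using d by simp
      also have "(\<delta> * v - u)^2 / (2 * \<delta>) = (\<delta> / 2) * v^2 + u^2 / (2 * \<delta>) - u * v"
        using d by (simp add: power2_eq_square field_simps)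
      finally show ?thesis by simp
    qed
    have u2: "u^2 \<le> 1 + S * ?P u"
    proof (cases "u \<le> 1")
      case True
      then have "u^2 \<le> 1" using u by (simp add: power_le_one)
      then show ?thesis using S Pu by (smt (verit) mult_nonneg_nonneg)
    next
      case False
      then have "u^2 \<le> S * ?P u" using hS[of u] \<open>\<not> T \<le> u\<close> by simp
      then show ?thesis by simp
    qed
    have "u^2 / (2 * \<delta>) \<le> (1 + S * ?P u) / (2 * \<delta>)" using u2 d by (simp add: divide_right_mono)
    also have "\<dots> = 1 / (2 * \<delta>) + (S / (2 * \<delta>)) * ?P u" by (simp add: add_divide_distrib)
    finally show ?thesis using amgm t1 by linarith
  qed
qed

lemma S_bound:
  fixes p \<alpha> c s T Kq :: real
  assumes p: "1 < p" and c: "1 < c" and s: "1 \<le> s" "s \<le> T"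
    and Kq: "\<And>s T. 1 \<le> s \<Longrightarrow> s \<le> T \<Longrightarrow>
           s powr (2 - p) * ln (c + s) powr (- \<alpha> * p) \<le> Kq * (1 + T powr (2 - p) * ln (c + T) powr (- \<alpha> * p))"
  shows "s^2 \<le> (Kq * (1 + T powr (2 - p) * ln (c + T) powr (- \<alpha> * p))
                / (2 powr (-p) * (1 + ln 2 / ln c) powr (- \<bar>\<alpha> * p\<bar>))) * LlogL_phi p \<alpha> c s"
proof -
  define \<kappa> where "\<kappa> = 2 powr (-p) * (1 + ln 2 / ln c) powr (- \<bar>\<alpha> * p\<bar>)"
  have lc: "0 < ln c" using c by simp
  have "0 < 1 + ln 2 / ln c" using lc by (intro add_pos_nonneg) auto
  then have k0: "0 < \<kappa>" unfolding \<kappa>_def by simp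
  have s0: "0 < s" using s by simp
  have ls: "0 < ln (c + s)" using c s0 by simp
  have low: "\<kappa> * s powr p * ln (c + s) powr (\<alpha> * p) \<le> LlogL_phi p \<alpha> c s"
    unfolding \<kappa>_def by (rule phi_lower[OF p c s0])
  have eq: "s^2 = (s powr (2 - p) * ln (c + s) powr (- \<alpha> * p)) * (s powr p * ln (c + s) powr (\<alpha> * p))"
  proof -
    have "(s powr (2 - p) * ln (c + s) powr (- \<alpha> * p)) * (s powr p * ln (c + s) powr (\<alpha> * p))
        = (s powr (2 - p) * s powr p) * (ln (c + s) powr (- \<alpha> * p) * ln (c + s) powr (\<alpha> * p))"
      by (simp add: algebra_simps)
    also have "\<dots> = s powr 2 * 1" using s0 ls by (simp add: powr_add[symmetric])
    also have "\<dots> = s^2" using s0 by (simp add: powr_numeral)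
    finally show ?thesis by simp
  qed
  have pp: "0 \<le> s powr p * ln (c + s) powr (\<alpha> * p)" by simp
  have "s^2 \<le> Kq * (1 + T powr (2 - p) * ln (c + T) powr (- \<alpha> * p)) * (s powr p * ln (c + s) powr (\<alpha> * p))"
    unfolding eq by (intro mult_right_mono Kq s pp)
  also have "\<dots> \<le> Kq * (1 + T powr (2 - p) * ln (c + T) powr (- \<alpha> * p)) * (LlogL_phi p \<alpha> c s / \<kappa>)"
  proof (rule mult_left_mono)
    show "s powr p * ln (c + s) powr (\<alpha> * p) \<le> LlogL_phi p \<alpha> c s / \<kappa>"
      using low k0 by (simp add: field_simps)
    have "0 \<le> s powr (2 - p) * ln (c + s) powr (- \<alpha> * p)" by simp
    then show "0 \<le> Kq * (1 + T powr (2 - p) * ln (c + T) powr (- \<alpha> * p))" using Kq[OF s] by linarith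
  qed
  finally show ?thesis unfolding \<kappa>_def by (simp add: field_simps)
qed

lemma trig_norm [simp]: "cmod (trig j x) = 1"
  unfolding trig_def by (simp add: norm_exp_eq_Re)

lemma trig_mult: "trig j x * trig k x = trig (j + k) x"
  unfolding trig_def by (simp add: exp_add[symmetric] algebra_simps)

lemma trig_cnj: "cnj (trig j x) = trig (- j) x"
  unfolding trig_def by (simp add: exp_cnj)

lemma trig_cont [continuous_intros]: "continuous_on S (trig j)"
  unfolding trig_def by (intro continuous_intros)

lemma trig_orth: "(trig m has_integral (if m = 0 then of_real (2 * pi) else 0)) {-pi..pi}"
proof (cases "m = 0")
  case True
  then have "trig m = (\<lambda>x. 1)" by (simp add: trig_def fun_eq_iff)
  then show ?thesis using True has_integral_const_real[of "1::complex" "-pi" pi]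
    by (simp add: scaleR_conv_of_real)
next
  case False
  define F where "F = (\<lambda>z::complex. exp (\<i> * of_int m * z) / (\<i> * of_int m))"
  have im: "\<i> * (of_int m :: complex) \<noteq> 0" using False by simp
  have der: "((\<lambda>x. F (of_real x)) has_vector_derivative trig m x) (at x within {-pi..pi})" for x
  proof -
    have "(F has_field_derivative exp (\<i> * of_int m * of_real x)) (at (of_real x))"
      unfolding F_def using im
      by (auto intro!: derivative_eq_intros simp: field_simps)
    then have "((\<lambda>x. F (of_real x)) has_vector_derivative exp (\<i> * of_int m * of_real x)) (at x)"
      by (rule has_vector_derivative_real_field)
    then show ?thesis unfolding trig_def by (rule has_vector_derivative_at_within)
  qed
  have "(trig m has_integral (F (of_real pi) - F (of_real (-pi)))) {-pi..pi}"
    by (rule fundamental_theorem_of_calculus) (use der in auto)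
  moreover have "F (of_real pi) = F (of_real (-pi))"
  proof -
    have "\<i> * of_int m * of_real pi = \<i> * of_int m * of_real (-pi) + complex_of_real (2 * real_of_int m * pi) * \<i>"
      by (simp add: algebra_simps)
    then have "exp (\<i> * of_int m * of_real pi) = exp (\<i> * of_int m * of_real (-pi)) * exp (complex_of_real (2 * real_of_int m * pi) * \<i>)"
      by (metis exp_add)
    also have "exp (complex_of_real (2 * real_of_int m * pi) * \<i>) = 1"
      by (rule exp_integer_2pi) simp
    finally show ?thesis unfolding F_def by simp
  qed
  ultimately show ?thesis using False by simp
qed

lemma fourier_ident:
  fixes a b :: "int \<Rightarrow> complex"
  assumes B: "finite B" and AB: "A \<subseteq> B"
  shows "((\<lambda>x. (\<Sum>k\<in>B. a k * trig k x) * cnj (\<Sum>j\<in>A. b j * trig j x)) has_integral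
           (of_real (2 * pi) * (\<Sum>j\<in>A. a j * cnj (b j)))) {-pi..pi}"
proof -
  have A: "finite A" using B AB by (rule finite_subset[rotated])
  have eq: "(\<Sum>k\<in>B. a k * trig k x) * cnj (\<Sum>j\<in>A. b j * trig j x)
          = (\<Sum>k\<in>B. \<Sum>j\<in>A. (a k * cnj (b j)) * trig (k - j) x)" for x
  proof -
    have "(\<Sum>k\<in>B. a k * trig k x) * cnj (\<Sum>j\<in>A. b j * trig j x)
        = (\<Sum>k\<in>B. a k * trig k x) * (\<Sum>j\<in>A. cnj (b j) * trig (- j) x)"
      by (simp add: cnj_sum trig_cnj)
    also have "\<dots> = (\<Sum>k\<in>B. \<Sum>j\<in>A. (a k * trig k x) * (cnj (b j) * trig (- j) x))"
      by (simp add: sum_product)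
    also have "\<dots> = (\<Sum>k\<in>B. \<Sum>j\<in>A. (a k * cnj (b j)) * trig (k - j) x)"
    proof (intro sum.cong refl)
      fix k j
      have "(a k * trig k x) * (cnj (b j) * trig (- j) x) = (a k * cnj (b j)) * (trig k x * trig (- j) x)"
        by (simp add: algebra_simps)
      also have "\<dots> = (a k * cnj (b j)) * trig (k - j) x" by (simp add: trig_mult)
      finally show "(a k * trig k x) * (cnj (b j) * trig (- j) x) = (a k * cnj (b j)) * trig (k - j) x" .
    qed
    finally show ?thesis .
  qed
  have int: "((\<lambda>x. \<Sum>k\<in>B. \<Sum>j\<in>A. (a k * cnj (b j)) * trig (k - j) x) has_integral
        (\<Sum>k\<in>B. \<Sum>j\<in>A. (a k * cnj (b j)) * (if k - j = 0 then of_real (2 * pi) else 0))) {-pi..pi}"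
    by (intro has_integral_sum B A ballI has_integral_mult_right trig_orth)
  have "(\<Sum>k\<in>B. \<Sum>j\<in>A. (a k * cnj (b j)) * (if k - j = 0 then of_real (2 * pi) else 0))
      = (\<Sum>j\<in>A. \<Sum>k\<in>B. (if k = j then (a k * cnj (b j)) * of_real (2 * pi) else 0))"
    by (subst sum.swap) (intro sum.cong refl, auto)
  also have "\<dots> = (\<Sum>j\<in>A. (a j * cnj (b j)) * of_real (2 * pi))"
    using AB B by (intro sum.cong refl) (auto simp: sum.delta)
  also have "\<dots> = of_real (2 * pi) * (\<Sum>j\<in>A. a j * cnj (b j))"
    by (simp add: sum_distrib_left mult.commute)
  finally have v: "(\<Sum>k\<in>B. \<Sum>j\<in>A. (a k * cnj (b j)) * (if k - j = 0 then of_real (2 * pi) else 0))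
      = of_real (2 * pi) * (\<Sum>j\<in>A. a j * cnj (b j))" .
  have feq: "(\<lambda>x. (\<Sum>k\<in>B. a k * trig k x) * cnj (\<Sum>j\<in>A. b j * trig j x))
       = (\<lambda>x. \<Sum>k\<in>B. \<Sum>j\<in>A. (a k * cnj (b j)) * trig (k - j) x)"
    by (intro ext eq)
  show ?thesis unfolding feq using int[unfolded v] .
qed

lemma conv_nn:
  fixes h :: "real \<Rightarrow> real"
  assumes hi: "(h has_integral I) {-pi..pi}" and nn: "\<And>x. 0 \<le> h x"
  shows "(\<integral>\<^sup>+x\<in>{-pi..<pi}. ennreal (h x) \<partial>lborel) = ennreal I"
proof -
  have n1: "negligible {x \<in> {-pi..pi} - {-pi..<pi}. h x \<noteq> 0}"
    by (rule negligible_subset[OF negligible_sing[of pi]]) auto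
  have n2: "negligible {x \<in> {-pi..<pi} - {-pi..pi}. h x \<noteq> 0}"
    by (rule negligible_subset[OF negligible_empty]) auto
  have "(h has_integral I) {-pi..<pi}"
    using has_integral_spike_set_eq[OF n1 n2] hi by simp
  then show ?thesis by (intro nn_integral_has_integral_lebesgue') (use nn in auto)
qed

lemma sum_cont [continuous_intros]: "continuous_on S (\<lambda>x. \<Sum>k\<in>B. a k * trig k x)"
  by (intro continuous_intros)

lemma core:
  fixes p \<alpha> c r Ka Kq :: real and A B :: "int set" and a :: "int \<Rightarrow> complex"
  assumes cv: "convex_on {0..} (LlogL_phi p \<alpha> c)" and p: "1 < p" and c: "1 < c"
    and B: "finite B" and AB: "A \<subseteq> B" and n1: "1 \<le> card A" and r: "0 < r"
    and hyp: "(\<integral>\<^sup>+ x \<in> {-pi..<pi}. ennreal (LlogL_phi p \<alpha> c (cmod (\<Sum>j\<in>B. a j * trig j x) / r)) \<partial>lborel) \<le> 1"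
    and Ka: "\<And>n::nat. 1 \<le> n \<Longrightarrow> real n \<le> Ka * (Hf p \<alpha> n powr p * ln (c + Hf p \<alpha> n) powr (\<alpha> * p))"
    and Ka0: "0 < Ka"
    and Kq: "\<And>s T. 1 \<le> s \<Longrightarrow> s \<le> T \<Longrightarrow>
           s powr (2 - p) * ln (c + s) powr (- \<alpha> * p) \<le> Kq * (1 + T powr (2 - p) * ln (c + T) powr (- \<alpha> * p))"
    and Kq0: "0 < Kq"
  shows "(\<Sum>j\<in>A. cmod (a j)) \<le>
     ((Ka / (2 powr (-p) * (1 + ln 2 / ln c) powr (- \<bar>\<alpha> * p\<bar>)) + 2 * pi
       + Kq * (1 + Ka) / (2 * (2 powr (-p) * (1 + ln 2 / ln c) powr (- \<bar>\<alpha> * p\<bar>)))) / (2 * pi))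
     * Hf p \<alpha> (card A) * r"
proof -
  let ?P = "LlogL_phi p \<alpha> c"
  define \<kappa> where "\<kappa> = 2 powr (-p) * (1 + ln 2 / ln c) powr (- \<bar>\<alpha> * p\<bar>)"
  define n where "n = card A"
  define H where "H = Hf p \<alpha> n"
  define q where "q = H powr (2 - p) * ln (c + H) powr (- \<alpha> * p)"
  define S where "S = Kq * (1 + q) / \<kappa>"
  define \<delta> where "\<delta> = H / real n"
  define Ac where "Ac = real n * H / ?P H"
  define f where "f = (\<lambda>x. \<Sum>j\<in>B. a j * trig j x)"
  define \<sigma> where "\<sigma> = (\<lambda>j. if a j = 0 then 1 else a j / of_real (cmod (a j)))"
  define g where "g = (\<lambda>x. \<Sum>j\<in>A. \<sigma> j * trig j x)"
  define \<Omega> where "\<Omega> = {-pi..<pi}"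
  have lc: "0 < ln c" using c by simp
  have "0 < 1 + ln 2 / ln c" using lc by (intro add_pos_nonneg) auto
  then have k0: "0 < \<kappa>" unfolding \<kappa>_def by simp
  have A: "finite A" using B AB by (rule finite_subset[rotated])
  have nr: "1 \<le> real n" using n1 by (simp add: n_def)
  have H0: "0 < H" unfolding H_def n_def using Hf_pos[OF n1] .
  have nH: "real n \<le> H^2"
  proof -
    have "sqrt (real n) \<le> H" unfolding H_def by (rule Hf_ge_sqrt)
    then have "(sqrt (real n))^2 \<le> H^2" by (intro power_mono) auto
    then show ?thesis by simp
  qed
  have hp0: "0 < H powr p * ln (c + H) powr (\<alpha> * p)" using H0 c by simp
  have PH: "\<kappa> * (H powr p * ln (c + H) powr (\<alpha> * p)) \<le> ?P H"
    using phi_lower[OF p c H0] unfolding \<kappa>_def by (simp add: mult.assoc)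
  have PH0: "0 < ?P H" using PH mult_pos_pos[OF k0 hp0] by linarith
  have Kan: "real n \<le> Ka * (H powr p * ln (c + H) powr (\<alpha> * p))"
    unfolding H_def n_def using Ka[OF n1] .
  have q0: "0 \<le> q" by (simp add: q_def)
  have S0: "0 \<le> S" using Kq0 q0 k0 by (simp add: S_def)
  have d0: "0 < \<delta>" using H0 nr by (simp add: \<delta>_def)
  have hS: "\<And>s. 1 \<le> s \<Longrightarrow> s < H \<Longrightarrow> s^2 \<le> S * ?P s"
    unfolding S_def q_def \<kappa>_def using S_bound[OF p c _ _ Kq] by (simp add: less_imp_le)
  have asig: "a j * cnj (\<sigma> j) = of_real (cmod (a j))" for j
  proof (cases "a j = 0")
    case True then show ?thesis by (simp add: \<sigma>_def)
  next
    case False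
    have "a j * cnj (a j / of_real (cmod (a j))) = (a j * cnj (a j)) / of_real (cmod (a j))"
      by (simp add: complex_cnj_divide)
    also have "\<dots> = of_real ((cmod (a j))^2) / of_real (cmod (a j))"
      by (metis complex_norm_square)
    also have "\<dots> = of_real (cmod (a j))" using False by (simp add: power2_eq_square)
    finally show ?thesis using False by (simp add: \<sigma>_def)
  qed
  have snorm: "cmod (\<sigma> j) = 1" for j
    by (cases "a j = 0") (auto simp: \<sigma>_def norm_divide)
  have sig2: "\<sigma> j * cnj (\<sigma> j) = 1" for j
    using complex_norm_square[of "\<sigma> j", symmetric] snorm[of j] by simp
  have gb: "cmod (g x) \<le> real n" for x
  proof -
    have "cmod (g x) \<le> (\<Sum>j\<in>A. cmod (\<sigma> j * trig j x))" unfolding g_def by (rule norm_sum)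
    also have "\<dots> = real n" by (simp add: norm_mult snorm n_def)
    finally show ?thesis .
  qed
  have fcont: "continuous_on UNIV f" unfolding f_def by (intro continuous_intros)
  have gcont: "continuous_on UNIV g" unfolding g_def by (intro continuous_intros)
  have I1: "((\<lambda>x. f x * cnj (g x)) has_integral (of_real (2 * pi) * of_real (\<Sum>j\<in>A. cmod (a j)))) {-pi..pi}"
    using fourier_ident[OF B AB, of a \<sigma>] unfolding f_def g_def by (simp add: asig)
  have I2c: "((\<lambda>x. g x * cnj (g x)) has_integral (of_real (2 * pi) * of_nat n)) {-pi..pi}"
    using fourier_ident[OF A order_refl, of \<sigma> \<sigma>] unfolding g_def by (simp add: sig2 n_def)
  have I2: "((\<lambda>x. (cmod (g x))^2) has_integral (2 * pi * real n)) {-pi..pi}"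
  proof -
    have "((\<lambda>x. Re (g x * cnj (g x))) has_integral Re (of_real (2 * pi) * of_nat n)) {-pi..pi}"
      by (rule has_integral_Re[OF I2c])
    moreover have "Re (g x * cnj (g x)) = (cmod (g x))^2" for x
      by (simp add: complex_norm_square[symmetric] del: complex_norm_square)
    ultimately show ?thesis by simp
  qed
  define J where "J = integral {-pi..pi} (\<lambda>x. cmod (f x) * cmod (g x))"
  have Jint: "((\<lambda>x. cmod (f x) * cmod (g x)) has_integral J) {-pi..pi}"
    unfolding J_def by (intro integrable_integral integrable_continuous_real continuous_intros
        continuous_on_subset[OF fcont] continuous_on_subset[OF gcont]) auto
  have sumJ: "2 * pi * (\<Sum>j\<in>A. cmod (a j)) \<le> J"
  proof -
    have "cmod (integral {-pi..pi} (\<lambda>x. f x * cnj (g x))) \<le> J"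
      unfolding J_def
    proof (rule integral_norm_bound_integral)
      show "(\<lambda>x. f x * cnj (g x)) integrable_on {-pi..pi}" using I1 by blast
      show "(\<lambda>x. cmod (f x) * cmod (g x)) integrable_on {-pi..pi}" using Jint by blast
      show "cmod (f x * cnj (g x)) \<le> cmod (f x) * cmod (g x)" for x by (simp add: norm_mult)
    qed
    moreover have "integral {-pi..pi} (\<lambda>x. f x * cnj (g x)) = of_real (2 * pi) * of_real (\<Sum>j\<in>A. cmod (a j))"
      using I1 by blast
    moreover have "cmod (of_real (2 * pi) * (of_real (\<Sum>j\<in>A. cmod (a j)) :: complex)) = 2 * pi * (\<Sum>j\<in>A. cmod (a j))"
      by (simp only: norm_mult norm_of_real) (simp add: sum_nonneg)
    ultimately show ?thesis by metis
  qed
  define F where "F = (\<lambda>x. cmod (f x) / r)"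
  define G where "G = (\<lambda>x. cmod (g x))"
  define c1 where "c1 = Ac + S / (2 * \<delta>)"
  have c10: "0 \<le> c1" unfolding c1_def Ac_def using nr H0 PH0 S0 d0 by simp
  have Pmeas: "?P \<in> borel_measurable borel" by (rule borel_measurable_mono[OF phi_mono[OF cv]])
  have Fmeas: "F \<in> borel_measurable borel" unfolding F_def
    by (intro borel_measurable_continuous_onI continuous_intros fcont) (use r in auto)
  have PFmeas: "(\<lambda>x. ?P (F x)) \<in> borel_measurable borel"
    using measurable_compose[OF Fmeas Pmeas] by (simp add: o_def)
  have Gmeas: "(\<lambda>x. \<delta> / 2 * (G x)^2 + 1 / (2 * \<delta>)) \<in> borel_measurable borel" unfolding G_def
    by (intro borel_measurable_continuous_onI continuous_intros gcont)
  have pw: "F x * G x \<le> c1 * ?P (F x) + (\<delta> / 2 * (G x)^2 + 1 / (2 * \<delta>))" for x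
  proof -
    have "F x * G x \<le> (real n * H / ?P H) * ?P (F x) + (\<delta> / 2) * (G x)^2 + 1 / (2 * \<delta>)
               + (S / (2 * \<delta>)) * ?P (F x)"
      by (rule pointwise[OF cv _ _ _ H0 PH0 d0 S0 hS]) (use r gb in \<open>auto simp: F_def G_def\<close>)
    then show ?thesis unfolding c1_def Ac_def by (simp add: algebra_simps)
  qed
  have FGint: "((\<lambda>x. F x * G x) has_integral J / r) {-pi..pi}"
    unfolding F_def G_def using has_integral_mult_left[OF Jint, of "1 / r"]
    by (simp add: field_simps)
  have G2int: "((\<lambda>x. \<delta> / 2 * (G x)^2 + 1 / (2 * \<delta>)) has_integral (\<delta> / 2 * (2 * pi * real n) + 2 * pi / (2 * \<delta>))) {-pi..pi}"
  proof -
    have "((\<lambda>x. \<delta> / 2 * (G x)^2) has_integral \<delta> / 2 * (2 * pi * real n)) {-pi..pi}"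
      unfolding G_def by (rule has_integral_mult_right[OF I2])
    moreover have "((\<lambda>x. 1 / (2 * \<delta>)) has_integral 2 * pi / (2 * \<delta>)) {-pi..pi}"
      using has_integral_const_real[of "1 / (2 * \<delta>)" "-pi" pi] by simp
    ultimately show ?thesis by (rule has_integral_add)
  qed
  have e1: "(\<integral>\<^sup>+x\<in>\<Omega>. ennreal (F x * G x) \<partial>lborel) = ennreal (J / r)"
    unfolding \<Omega>_def by (rule conv_nn[OF FGint]) (use r in \<open>simp add: F_def G_def\<close>)
  have e2: "(\<integral>\<^sup>+x\<in>\<Omega>. ennreal (\<delta> / 2 * (G x)^2 + 1 / (2 * \<delta>)) \<partial>lborel)
        = ennreal (\<delta> / 2 * (2 * pi * real n) + 2 * pi / (2 * \<delta>))"
    unfolding \<Omega>_def by (rule conv_nn[OF G2int]) (use d0 in simp)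
  have e3: "(\<integral>\<^sup>+x\<in>\<Omega>. ennreal (c1 * ?P (F x)) \<partial>lborel) = ennreal c1 * (\<integral>\<^sup>+x\<in>\<Omega>. ennreal (?P (F x)) \<partial>lborel)"
  proof -
    have "(\<integral>\<^sup>+x\<in>\<Omega>. ennreal (c1 * ?P (F x)) \<partial>lborel) = (\<integral>\<^sup>+x. ennreal c1 * (ennreal (?P (F x)) * indicator \<Omega> x) \<partial>lborel)"
      using c10 by (simp add: ennreal_mult mult.assoc phi_nonneg)
    also have "\<dots> = ennreal c1 * (\<integral>\<^sup>+x\<in>\<Omega>. ennreal (?P (F x)) \<partial>lborel)"
      by (rule nn_integral_cmult) (use PFmeas in \<open>auto simp: \<Omega>_def\<close>)
    finally show ?thesis .
  qed
  have hyp': "(\<integral>\<^sup>+x\<in>\<Omega>. ennreal (?P (F x)) \<partial>lborel) \<le> 1"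
    using hyp unfolding \<Omega>_def F_def f_def .
  have "ennreal (J / r) = (\<integral>\<^sup>+x\<in>\<Omega>. ennreal (F x * G x) \<partial>lborel)" using e1 by simp
  also have "\<dots> \<le> (\<integral>\<^sup>+x\<in>\<Omega>. (ennreal (c1 * ?P (F x)) + ennreal (\<delta> / 2 * (G x)^2 + 1 / (2 * \<delta>))) \<partial>lborel)"
  proof (rule nn_integral_mono)
    fix x
    have "ennreal (F x * G x) \<le> ennreal (c1 * ?P (F x) + (\<delta> / 2 * (G x)^2 + 1 / (2 * \<delta>)))"
      using pw by (rule ennreal_leI)
    also have "\<dots> = ennreal (c1 * ?P (F x)) + ennreal (\<delta> / 2 * (G x)^2 + 1 / (2 * \<delta>))"
      using c10 d0 by (intro ennreal_plus) (auto simp: phi_nonneg)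
    finally show "ennreal (F x * G x) * indicator \<Omega> x \<le> (ennreal (c1 * ?P (F x)) + ennreal (\<delta> / 2 * (G x)^2 + 1 / (2 * \<delta>))) * indicator \<Omega> x"
      by (intro mult_right_mono) auto
  qed
  also have "\<dots> = (\<integral>\<^sup>+x\<in>\<Omega>. ennreal (c1 * ?P (F x)) \<partial>lborel) + (\<integral>\<^sup>+x\<in>\<Omega>. ennreal (\<delta> / 2 * (G x)^2 + 1 / (2 * \<delta>)) \<partial>lborel)"
    by (rule nn_set_integral_add) (use PFmeas Gmeas in \<open>auto simp: \<Omega>_def\<close>)
  also have "\<dots> \<le> ennreal c1 * 1 + ennreal (\<delta> / 2 * (2 * pi * real n) + 2 * pi / (2 * \<delta>))"
    unfolding e2 e3 by (intro add_mono mult_left_mono hyp') auto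
  also have "\<dots> = ennreal (c1 + (\<delta> / 2 * (2 * pi * real n) + 2 * pi / (2 * \<delta>)))"
    using c10 d0 by (simp add: ennreal_plus)
  finally have Jr: "J / r \<le> c1 + (\<delta> / 2 * (2 * pi * real n) + 2 * pi / (2 * \<delta>))"
    using c10 d0 by (subst (asm) ennreal_le_iff) auto
  define hp where "hp = H powr p * ln (c + H) powr (\<alpha> * p)"
  have hp0': "0 < hp" using hp0 by (simp add: hp_def)
  have qhp: "q * hp = H^2"
  proof -
    have lH: "0 < ln (c + H)" using c H0 by simp
    have "q * hp = (H powr (2 - p) * H powr p) * (ln (c + H) powr (- \<alpha> * p) * ln (c + H) powr (\<alpha> * p))"
      by (simp add: q_def hp_def algebra_simps)
    also have "\<dots> = H powr 2" using H0 lH by (simp add: powr_add[symmetric])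
    finally show ?thesis using H0 by (simp add: powr_numeral)
  qed
  have b1: "Ac \<le> Ka * H / \<kappa>"
  proof -
    have "real n * \<kappa> \<le> Ka * (\<kappa> * hp)" using Kan k0 by (simp add: hp_def mult_left_mono algebra_simps)
    also have "\<dots> \<le> Ka * ?P H" using PH Ka0 by (intro mult_left_mono) (auto simp: hp_def)
    finally have "real n * \<kappa> \<le> Ka * ?P H" .
    then have "real n * H * \<kappa> \<le> Ka * H * ?P H" using H0
      by (metis mult.commute mult.left_commute mult_left_mono less_imp_le)
    then show ?thesis unfolding Ac_def using PH0 k0 by (simp add: field_simps)
  qed
  have b2: "\<delta> / 2 * (2 * pi * real n) = pi * H" using nr by (simp add: \<delta>_def field_simps)
  have b3: "2 * pi / (2 * \<delta>) \<le> pi * H"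
  proof -
    have "2 * pi / (2 * \<delta>) = pi * (real n / H)" using nr H0 by (simp add: \<delta>_def field_simps)
    also have "real n / H \<le> H" using nH H0 by (simp add: field_simps power2_eq_square)
    then have "pi * (real n / H) \<le> pi * H" by (intro mult_left_mono) auto
    finally show ?thesis .
  qed
  have b4: "S / (2 * \<delta>) \<le> Kq * (1 + Ka) / (2 * \<kappa>) * H"
  proof -
    have "real n * q \<le> Ka * hp * q" using Kan q0 by (intro mult_right_mono) (auto simp: hp_def)
    also have "\<dots> = Ka * H^2" using qhp by (simp add: algebra_simps)
    finally have nq: "real n * q \<le> Ka * H^2" .
    have "real n * (1 + q) \<le> (1 + Ka) * H^2" using nq nH by (simp add: algebra_simps)
    then have "real n * (1 + q) / H \<le> (1 + Ka) * H" using H0 by (simp add: field_simps power2_eq_square)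
    moreover have "S / (2 * \<delta>) = Kq / (2 * \<kappa>) * (real n * (1 + q) / H)"
      using H0 nr k0 by (simp add: S_def \<delta>_def field_simps)
    moreover have "0 \<le> Kq / (2 * \<kappa>)" using Kq0 k0 by simp
    ultimately have "S / (2 * \<delta>) \<le> Kq / (2 * \<kappa>) * ((1 + Ka) * H)"
      by (metis mult_left_mono)
    then show ?thesis by (simp add: field_simps)
  qed
  have tot: "J / r \<le> (Ka / \<kappa> + 2 * pi + Kq * (1 + Ka) / (2 * \<kappa>)) * H"
    using Jr b1 b2 b3 b4 unfolding c1_def by (simp add: algebra_simps)
  then have "J \<le> (Ka / \<kappa> + 2 * pi + Kq * (1 + Ka) / (2 * \<kappa>)) * H * r" using r by (simp add: field_simps)
  then have "2 * pi * (\<Sum>j\<in>A. cmod (a j)) \<le> (Ka / \<kappa> + 2 * pi + Kq * (1 + Ka) / (2 * \<kappa>)) * H * r"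
    using sumJ by linarith
  then show ?thesis unfolding \<kappa>_def[symmetric] H_def n_def by (simp add: field_simps)
qed

lemma nonempty_R:
  fixes p \<alpha> c :: real and B :: "int set" and a :: "int \<Rightarrow> complex"
  assumes cv: "convex_on {0..} (LlogL_phi p \<alpha> c)"
  shows "\<exists>r>0. (\<integral>\<^sup>+ x \<in> {-pi..<pi}. ennreal (LlogL_phi p \<alpha> c (cmod (\<Sum>j\<in>B. a j * trig j x) / r)) \<partial>lborel) \<le> 1"
proof -
  let ?P = "LlogL_phi p \<alpha> c"
  define M where "M = (\<Sum>j\<in>B. cmod (a j))"
  define r where "r = (M + 1) * (2 * pi * ?P 1 + 1)"
  have M0: "0 \<le> M" unfolding M_def by (simp add: sum_nonneg)
  have P1: "0 \<le> ?P 1" by (rule phi_nonneg)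
  have "0 < 2 * pi * ?P 1 + 1" using P1 pi_gt_zero by (intro add_nonneg_pos) auto
  then have r0: "0 < r" unfolding r_def using M0 by (intro mult_pos_pos) auto
  have fb: "cmod (\<Sum>j\<in>B. a j * trig j x) \<le> M" for x
  proof -
    have "cmod (\<Sum>j\<in>B. a j * trig j x) \<le> (\<Sum>j\<in>B. cmod (a j * trig j x))" by (rule norm_sum)
    also have "\<dots> = M" by (simp add: M_def norm_mult)
    finally show ?thesis .
  qed
  have pb: "?P (cmod (\<Sum>j\<in>B. a j * trig j x) / r) \<le> 1 / (2 * pi)" for x
  proof -
    define u where "u = cmod (\<Sum>j\<in>B. a j * trig j x) / r"
    have u0: "0 \<le> u" using r0 by (simp add: u_def)
    have ub: "u \<le> 1 / (2 * pi * ?P 1 + 1)"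
    proof -
      have "u \<le> M / r" unfolding u_def using fb[of x] r0 by (simp add: divide_right_mono)
      also have "M / r \<le> (M + 1) / r" using r0 by (simp add: divide_right_mono)
      also have "(M + 1) / r = 1 / (2 * pi * ?P 1 + 1)" unfolding r_def using M0 by simp
      finally show ?thesis .
    qed
    have u1: "u \<le> 1" using ub P1 by (smt (verit) divide_le_eq_1 pi_gt_zero mult_nonneg_nonneg)
    have "?P u \<le> (u / 1) * ?P 1" by (rule phi_ratio[OF cv u0 u1]) simp
    also have "\<dots> \<le> (1 / (2 * pi * ?P 1 + 1)) * ?P 1" using ub P1 by (simp only: div_by_1) (rule mult_right_mono)
    also have "\<dots> \<le> 1 / (2 * pi)"
    proof -
      have d: "0 < 2 * pi * ?P 1 + 1" using P1 pi_gt_zero by (intro add_nonneg_pos) auto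
      have "(1 / (2 * pi * ?P 1 + 1)) * ?P 1 * (2 * pi) = (2 * pi * ?P 1) / (2 * pi * ?P 1 + 1)" by simp
      also have "\<dots> \<le> 1" using d by simp
      finally show ?thesis using pi_gt_zero by (simp add: field_simps)
    qed
    finally show ?thesis unfolding u_def .
  qed
  have "(\<integral>\<^sup>+ x \<in> {-pi..<pi}. ennreal (?P (cmod (\<Sum>j\<in>B. a j * trig j x) / r)) \<partial>lborel)
      \<le> (\<integral>\<^sup>+ x \<in> {-pi..<pi}. ennreal (1 / (2 * pi)) \<partial>lborel)"
    by (intro nn_integral_mono mult_right_mono ennreal_leI pb) auto
  also have "\<dots> = ennreal (1 / (2 * pi)) * emeasure lborel {-pi..<pi}"
    by (rule nn_integral_cmult_indicator) simp
  also have "\<dots> = 1" by (simp add: ennreal_mult[symmetric])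
  finally show ?thesis using r0 by blast
qed

theorem corollary5p3:
  fixes p \<alpha> c :: real
  assumes "1 < p" and "c > 1"
    and "convex_on {0..} (LlogL_phi p \<alpha> c)"
  shows "\<exists>C>0. \<forall>N::nat. \<forall>D::nat. \<forall>(A::int set) (B::int set) (a::int \<Rightarrow> complex).
           finite B \<and> A \<subseteq> B \<and> card A \<le> N \<and> card B < D \<longrightarrow>
           (\<Sum>j\<in>A. cmod (a j)) \<le>
             C * max (sqrt (real (card A)))
                     (real (card A) powr (1 / p) * (ln (exp 1 + real (card A))) powr (- \<alpha>))
             * luxemburg_norm (LlogL_phi p \<alpha> c) (\<lambda>x. \<Sum>j\<in>B. a j * trig j x)"
proof -
  note p = assms(1) and c = assms(2) and cv = assms(3)
  obtain Ka where Ka0: "0 < Ka" and Ka: "\<And>n::nat. 1 \<le> n \<Longrightarrow>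
     real n \<le> Ka * (Hf p \<alpha> n powr p * ln (c + Hf p \<alpha> n) powr (\<alpha> * p))"
    using key_a[OF p c] by blast
  obtain Kq where Kq0: "0 < Kq" and Kq: "\<And>s T. 1 \<le> s \<Longrightarrow> s \<le> T \<Longrightarrow>
           s powr (2 - p) * ln (c + s) powr (- \<alpha> * p) \<le> Kq * (1 + T powr (2 - p) * ln (c + T) powr (- \<alpha> * p))"
    using quasi_mono[OF c, of "2 - p" "- \<alpha> * p"] by blast
  define \<kappa> where "\<kappa> = 2 powr (-p) * (1 + ln 2 / ln c) powr (- \<bar>\<alpha> * p\<bar>)"
  define C where "C = (Ka / \<kappa> + 2 * pi + Kq * (1 + Ka) / (2 * \<kappa>)) / (2 * pi)"
  have lc: "0 < ln c" using c by simp
  have "0 < 1 + ln 2 / ln c" using lc by (intro add_pos_nonneg) auto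
  then have k0: "0 < \<kappa>" unfolding \<kappa>_def by simp
  have C0: "0 < C" unfolding C_def using k0 Ka0 Kq0 by (simp add: add_pos_pos)
  show ?thesis
  proof (intro exI[of _ C] conjI allI impI)
    show "0 < C" by (rule C0)
    fix N D :: nat and A B :: "int set" and a :: "int \<Rightarrow> complex"
    assume h: "finite B \<and> A \<subseteq> B \<and> card A \<le> N \<and> card B < D"
    then have B: "finite B" and AB: "A \<subseteq> B" by auto
    have A: "finite A" using B AB by (rule finite_subset[rotated])
    define R where "R = {r::real. r > 0 \<and>
      (\<integral>\<^sup>+ x \<in> {-pi..<pi}. ennreal (LlogL_phi p \<alpha> c (cmod (\<Sum>j\<in>B. a j * trig j x) / r)) \<partial>lborel) \<le> 1}"
    have lux: "luxemburg_norm (LlogL_phi p \<alpha> c) (\<lambda>x. \<Sum>j\<in>B. a j * trig j x) = Inf R"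
      unfolding luxemburg_norm_def R_def by simp
    have Rne: "R \<noteq> {}" using nonempty_R[OF cv, of a B] unfolding R_def by blast
    have Rbd: "bdd_below R" unfolding R_def by (rule bdd_belowI[of _ 0]) auto
    have Inf0: "0 \<le> Inf R" by (rule cInf_greatest[OF Rne]) (auto simp: R_def)
    show "(\<Sum>j\<in>A. cmod (a j)) \<le> C * max (sqrt (real (card A)))
             (real (card A) powr (1 / p) * (ln (exp 1 + real (card A))) powr (- \<alpha>))
             * luxemburg_norm (LlogL_phi p \<alpha> c) (\<lambda>x. \<Sum>j\<in>B. a j * trig j x)"
    proof (cases "card A = 0")
      case True
      then have "A = {}" using A by simp
      then show ?thesis by simp
    next
      case False
      then have n1: "1 \<le> card A" by simp
      define H where "H = Hf p \<alpha> (card A)"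
      have H0: "0 < H" unfolding H_def using Hf_pos[OF n1] .
      have core': "(\<Sum>j\<in>A. cmod (a j)) \<le> C * H * r" if "r \<in> R" for r
      proof -
        have r: "0 < r" and hr: "(\<integral>\<^sup>+ x \<in> {-pi..<pi}. ennreal (LlogL_phi p \<alpha> c (cmod (\<Sum>j\<in>B. a j * trig j x) / r)) \<partial>lborel) \<le> 1"
          using that by (auto simp: R_def)
        show ?thesis using core[OF cv p c B AB n1 r hr Ka Ka0 Kq Kq0]
          unfolding C_def H_def \<kappa>_def by simp
      qed
      have CH: "0 < C * H" using C0 H0 by simp
      have "(\<Sum>j\<in>A. cmod (a j)) / (C * H) \<le> Inf R"
      proof (rule cInf_greatest[OF Rne])
        fix r assume "r \<in> R"
        then show "(\<Sum>j\<in>A. cmod (a j)) / (C * H) \<le> r"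
          using core'[of r] CH by (simp add: divide_le_eq mult.commute)
      qed
      then have "(\<Sum>j\<in>A. cmod (a j)) \<le> C * H * Inf R" using CH by (simp add: divide_le_eq mult.commute)
      then show ?thesis unfolding lux H_def Hf_def by simp
    qed
  qed
qed

end
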